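(* The algorithm $K_2$ for the $2$-cache problem is a knowledge state algorithm (that is, each specified adjustment satisfies the required inequality $(\omega\wedge r)(x)\ge\mathrm{adjust}+\sum_i\lambda_i\omega_i(x)$ for all configurations $x$), and the function $\Phi$ defined by $\Phi(A^{a,b})=0$ and $\Phi(B^{a,b,c})=\tfrac12$ is a $\tfrac32$-ks-potential for $K_2$.
   Context: The $k$-cache problem: there is an infinite set $P$ of pages; the state set $\mathcal X$ is the set of $k$-element subsets of $P$ (cache contents), with a given initial cache $s^0$; the requests are the pages, $\mathcal R=P$; $d(x,y)=|x\setminus y|$; and $\mathrm{cost}(x,r,y)=2$ if $x=y$ and $r\notin x$; $\mathrm{cost}(x,r,y)=d(x,y)$ if $r\in x$ or $r\in y$; $\mathrm{cost}(x,r,y)=d(x,y)+1$ otherwise. $\Pi$ is the set of finitely supported probability distributions on $\mathcal X$; for $\pi,\pi'\in\Pi$, $\mathrm{cost}(\pi,r,\pi')$ is the minimum of $\sum_{x,y}\gamma(x,y)\mathrm{cost}(x,r,y)$ over distributions $\gamma$ on $\mathrm{supp}(\pi)\times\mathrm{supp}(\pi')$ with marginals $\pi,\pi'$. An estimator is a function $\omega:\mathcal X\to[0,\infty)$ with $\omega(y)\le\omega(x)+d(x,y)$; the update operator is $(\omega\wedge r)(y)=\inf_{x}\{\omega(x)+\mathrm{cost}(x,r,y)\}$. Bar notation: a string $\alpha$ of distinct page names and exactly $k$ bars, with at least $i$ page names to the left of the $i$-th bar, denotes the estimator $\omega_\alpha(y)=\min_{x\in S_\alpha}d(x,y)$, where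 $S_\alpha$ is the set of configurations $x$ such that for each $i=1,\dots,k$ at least $i$ elements of $x$ are written to the left of the $i$-th bar. E.g. for $k=2$, $ab||=d(\{a,b\},\cdot)$ and $a|bc|$ has $S=\{\{a,b\},\{a,c\}\}$. Knowledge state algorithm: a knowledge state is a pair $(\pi,\omega)$, $\pi\in\Pi$, $\omega$ an estimator; the initial one is $(s^0,\omega^0)$ with $\omega^0(s^0)=0$. For each knowledge state $k=(\pi,\omega)$ and request $r$ the algorithm specifies subsequent knowledge states $k_i=(\pi_i,\omega_i)$ with weights $\lambda_i>0$ summing to $1$ (the next state is $k_i$ with probability $\lambda_i$) and a real number $\mathrm{adjust}(k,r)$, required to satisfy $(\omega\wedge r)(x)\ge\mathrm{adjust}(k,r)+\sum_i\lambda_i\omega_i(x)$ for all $x$. Step cost $\mathrm{cost}(k,r)=\mathrm{cost}(\pi,r,\sum_i\lambda_i\pi_i)$. A $C$-ks-potential is a function $\Phi\ge0$ on knowledge states such that for every knowledge state $k$ and request $r$: $\mathrm{cost}(k,r)+\sum_i\lambda_i\Phi(k_i)-\Phi(k)\le C\cdot\mathrm{adjust}(k,r)$. Algorithm $K_2$ ($k=2$; $a,b,c,d$ always denote distinct pages). Knowledge states: $A^{a,b}=(\{a,b\},\ ab||)$ (point mass on $\{a,b\}$; $A^{a,b}=A^{b,a}$), and $B^{a,b,c}=(\tfrac12\{a,b\}+\tfrac12\{a,c\},\ a|bc|)$ (so $B^{a,b,c}=B^{a,c,b}$). Initial state $A^{a,b}$ where $s^0=\{a,b\}$. Transitions: from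 $A^{a,b}$: request $a$ or $b$: stay in $A^{a,b}$, adjust $0$; request $c\notin\{a,b\}$: go to $B^{c,a,b}$, adjust $1$. From $B^{a,b,c}$: request $a$: stay, adjust $0$; request $b$: go to $A^{b,a}$, adjust $0$; request $c$: go to $A^{c,a}$, adjust $0$; request $d\notin\{a,b,c\}$: go to each of $A^{d,a},A^{d,b},A^{d,c}$ with probability $\tfrac13$, adjust $\tfrac13$. *)

theory Defs
  imports Complex_Main
begin

definition configs :: "nat \<Rightarrow> 'p set set" where
  "configs k = {x. finite x \<and> card x = k}"

definition dist_cfg :: "'p set \<Rightarrow> 'p set \<Rightarrow> real" where
  "dist_cfg x y = real (card (x - y))"

definition cost_cfg :: "'p set \<Rightarrow> 'p \<Rightarrow> 'p set \<Rightarrow> real" where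
  "cost_cfg x r y =
     (if x = y \<and> r \<notin> x then 2
      else if r \<in> x \<or> r \<in> y then dist_cfg x y
      else dist_cfg x y + 1)"

text \<open>Finitely supported distributions on configurations, as weight functions.\<close>
definition supp_dist :: "('p set \<Rightarrow> real) \<Rightarrow> 'p set set" where
  "supp_dist \<pi> = {x. \<pi> x \<noteq> 0}"

definition couplings :: "('p set \<Rightarrow> real) \<Rightarrow> ('p set \<Rightarrow> real) \<Rightarrow> ('p set \<times> 'p set \<Rightarrow> real) set" where
  "couplings \<pi> \<pi>' = {\<gamma>.
      (\<forall>x\<in>supp_dist \<pi>. \<forall>y\<in>supp_dist \<pi>'. \<gamma> (x, y) \<ge> 0) \<and>
      (\<forall>x\<in>supp_dist \<pi>. (\<Sum>y\<in>supp_dist \<pi>'. \<gamma> (x, y)) = \<pi> x) \<and>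
      (\<forall>y\<in>supp_dist \<pi>'. (\<Sum>x\<in>supp_dist \<pi>. \<gamma> (x, y)) = \<pi>' y)}"

definition cost_dist :: "('p set \<Rightarrow> real) \<Rightarrow> 'p \<Rightarrow> ('p set \<Rightarrow> real) \<Rightarrow> real" where
  "cost_dist \<pi> r \<pi>' =
     Inf ((\<lambda>\<gamma>. \<Sum>xy\<in>supp_dist \<pi> \<times> supp_dist \<pi>'. \<gamma> xy * cost_cfg (fst xy) r (snd xy))
            ` couplings \<pi> \<pi>')"

definition upd :: "nat \<Rightarrow> ('p set \<Rightarrow> real) \<Rightarrow> 'p \<Rightarrow> 'p set \<Rightarrow> real" where
  "upd k \<omega> r y = (INF x\<in>configs k. \<omega> x + cost_cfg x r y)"

datatype 'p tok = Pg 'p | Bar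

text \<open>Pages written to the left of the i-th bar: those preceded by fewer than i bars.\<close>
definition left_of_bar :: "'p tok list \<Rightarrow> nat \<Rightarrow> 'p set" where
  "left_of_bar \<alpha> i = {p. \<exists>j<length \<alpha>. \<alpha> ! j = Pg p \<and> card {m. m < j \<and> \<alpha> ! m = Bar} < i}"

definition S_bar :: "nat \<Rightarrow> 'p tok list \<Rightarrow> 'p set set" where
  "S_bar k \<alpha> = {x\<in>configs k. \<forall>i\<in>{1..k}. card (x \<inter> left_of_bar \<alpha> i) \<ge> i}"

definition omega_bar :: "nat \<Rightarrow> 'p tok list \<Rightarrow> 'p set \<Rightarrow> real" where
  "omega_bar k \<alpha> y = (INF x\<in>S_bar k \<alpha>. dist_cfg x y)"

datatype 'p ks2 = KA 'p 'p | KB 'p 'p 'p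

fun valid_ks2 :: "'p ks2 \<Rightarrow> bool" where
  "valid_ks2 (KA a b) = (a \<noteq> b)"
| "valid_ks2 (KB a b c) = (a \<noteq> b \<and> a \<noteq> c \<and> b \<noteq> c)"

fun ks2_dist :: "'p ks2 \<Rightarrow> 'p set \<Rightarrow> real" where
  "ks2_dist (KA a b) = (\<lambda>x. if x = {a, b} then 1 else 0)"
| "ks2_dist (KB a b c) = (\<lambda>x. (if x = {a, b} then 1/2 else 0) + (if x = {a, c} then 1/2 else 0))"

fun ks2_est :: "'p ks2 \<Rightarrow> 'p set \<Rightarrow> real" where
  "ks2_est (KA a b) = omega_bar 2 [Pg a, Pg b, Bar, Bar]"
| "ks2_est (KB a b c) = omega_bar 2 [Pg a, Bar, Pg b, Pg c, Bar]"

text \<open>Transitions: list of (probability, successor state).\<close>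
fun K2_trans :: "'p ks2 \<Rightarrow> 'p \<Rightarrow> (real \<times> 'p ks2) list" where
  "K2_trans (KA a b) r = (if r = a \<or> r = b then [(1, KA a b)] else [(1, KB r a b)])"
| "K2_trans (KB a b c) r =
     (if r = a then [(1, KB a b c)]
      else if r = b then [(1, KA b a)]
      else if r = c then [(1, KA c a)]
      else [(1/3, KA r a), (1/3, KA r b), (1/3, KA r c)])"

fun K2_adjust :: "'p ks2 \<Rightarrow> 'p \<Rightarrow> real" where
  "K2_adjust (KA a b) r = (if r = a \<or> r = b then 0 else 1)"
| "K2_adjust (KB a b c) r = (if r = a \<or> r = b \<or> r = c then 0 else 1/3)"

definition mix_dist :: "(real \<times> 'p ks2) list \<Rightarrow> 'p set \<Rightarrow> real" where
  "mix_dist tr x = (\<Sum>(l, s)\<leftarrow>tr. l * ks2_dist s x)"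

definition K2_cost :: "'p ks2 \<Rightarrow> 'p \<Rightarrow> real" where
  "K2_cost s r = cost_dist (ks2_dist s) r (mix_dist (K2_trans s r))"

fun Phi2 :: "'p ks2 \<Rightarrow> real" where
  "Phi2 (KA a b) = 0"
| "Phi2 (KB a b c) = 1/2"

end

theory Submission
  imports Defs
begin


lemma configs2_obtain: assumes "x \<in> configs 2" obtains p q where "p\<noteq>q" "x={p,q}"
  using assms unfolding configs_def by (auto simp: card_2_iff)

lemma pair_configs: "p\<noteq>q \<Longrightarrow> {p,q} \<in> configs 2" by (simp add: configs_def)

lemma configs_finite: "x \<in> configs k \<Longrightarrow> finite x" by (simp add: configs_def)

lemma dist_pair: assumes "a\<noteq>b" "finite y"
  shows "dist_cfg {a,b} y = (if a\<in>y then 0 else 1) + (if b\<in>y then 0 else 1)"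
  using assms by (auto simp: dist_cfg_def insert_Diff_if)

lemma dist_nonneg: "dist_cfg x y \<ge> 0" by (simp add: dist_cfg_def)

lemma dist_tri: assumes "finite x" "finite y" shows "dist_cfg x z \<le> dist_cfg x y + dist_cfg y z"
proof -
  have "card (x - z) \<le> card ((x-y) \<union> (y-z))" by (rule card_mono) (use assms in auto)
  also have "\<dots> \<le> card (x-y) + card (y-z)" by (rule card_Un_le)
  finally show ?thesis unfolding dist_cfg_def by linarith
qed

lemma cost_ge_dist: "dist_cfg x y \<le> cost_cfg x r y"
  unfolding cost_cfg_def by (auto simp: dist_cfg_def)

lemma cost_nonneg: "0 \<le> cost_cfg x r y"
  using cost_ge_dist[of x y r] dist_nonneg[of x y] by linarith

lemma dist_sym: assumes "x \<in> configs k" "y \<in> configs k" shows "dist_cfg x y = dist_cfg y x"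
  using assms unfolding configs_def dist_cfg_def
  by (simp add: card_Diff_subset_Int Int_commute)

lemma dist_pos: assumes "x \<in> configs k" "y \<in> configs k" "x \<noteq> y" shows "1 \<le> dist_cfg x y"
proof -
  have "x - y \<noteq> {}"
  proof
    assume "x - y = {}"
    hence "x \<subseteq> y" by auto
    moreover have "finite y" "card x = card y" using assms unfolding configs_def by auto
    ultimately have "x = y" using card_subset_eq by blast
    thus False using assms by simp
  qed
  hence "card (x - y) \<noteq> 0" using assms by (simp add: configs_def)
  thus ?thesis unfolding dist_cfg_def by simp
qed

lemma dist_mem: assumes "x \<in> configs k" "y \<in> configs k" "r \<in> x" "r \<notin> y" shows "1 \<le> dist_cfg x y"
  using dist_pos[OF assms(1,2)] assms(3,4) by auto

definition bnd :: "'p set \<Rightarrow> 'p \<Rightarrow> 'p set \<Rightarrow> real" where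
  "bnd s r x = (if r \<in> s \<or> r \<in> x then dist_cfg s x else max (dist_cfg s x + 1) 2)"

lemma bnd_le: assumes s: "s \<in> configs k" and z: "z \<in> configs k" and x: "x \<in> configs k"
  shows "bnd s r x \<le> dist_cfg s z + cost_cfg z r x"
proof (cases "r \<in> s \<or> r \<in> x")
  case True
  then show ?thesis unfolding bnd_def
    using dist_tri[OF configs_finite[OF s] configs_finite[OF z], of x] cost_ge_dist[of z x r] by auto
next
  case False
  note fs = configs_finite[OF s] and fz = configs_finite[OF z] and fx = configs_finite[OF x]
  show ?thesis
  proof (cases "r \<in> z")
    case True
    have c: "cost_cfg z r x = dist_cfg z x" using True False unfolding cost_cfg_def by auto
    have 1: "1 \<le> dist_cfg z s" using dist_mem[OF z s True] False by auto
    have 2: "1 \<le> dist_cfg z x" using dist_mem[OF z x True] False by auto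
    have "card (s - x) \<le> card ((s-z) \<union> ((s\<inter>z)-x))" by (rule card_mono) (use fs in auto)
    also have "\<dots> \<le> card (s-z) + card ((s\<inter>z)-x)" by (rule card_Un_le)
    finally have a: "card (s - x) \<le> card (s-z) + card ((s\<inter>z)-x)" .
    have "card (insert r ((s\<inter>z)-x)) \<le> card (z - x)" by (rule card_mono) (use fz True False in auto)
    moreover have "card (insert r ((s\<inter>z)-x)) = card ((s\<inter>z)-x) + 1" using fs False by simp
    ultimately have "card (s - x) + 1 \<le> card (s-z) + card (z - x)" using a by linarith
    hence "dist_cfg s x + 1 \<le> dist_cfg s z + dist_cfg z x" unfolding dist_cfg_def by linarith
    moreover have "dist_cfg s z = dist_cfg z s" using dist_sym[OF s z] .
    ultimately show ?thesis unfolding bnd_def c using False 1 2 by auto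
  next
    case rz: False
    show ?thesis
    proof (cases "z = x")
      case True
      then have "cost_cfg z r x = 2" using False unfolding cost_cfg_def by auto
      then show ?thesis unfolding bnd_def using False True dist_nonneg[of s x] by auto
    next
      case ne: False
      then have c: "cost_cfg z r x = dist_cfg z x + 1" using False rz unfolding cost_cfg_def by auto
      have "1 \<le> dist_cfg z x" using dist_pos[OF z x ne] .
      then show ?thesis unfolding bnd_def c using False dist_tri[OF fs fz, of x] dist_nonneg[of s z] by auto
    qed
  qed
qed


lemma ex_less4: "(\<exists>j<length [w,x,y,z::'a]. P j) = (P 0 \<or> P 1 \<or> P 2 \<or> P 3)"
  by (auto simp: less_Suc_eq numeral_eq_Suc)
lemma ex_less5: "(\<exists>j<length [v,w,x,y,z::'a]. P j) = (P 0 \<or> P 1 \<or> P 2 \<or> P 3 \<or> P 4)"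
  by (auto simp: less_Suc_eq numeral_eq_Suc)

lemma left_A: "left_of_bar [Pg a, Pg b, Bar, Bar] i = (if 0 < i then {a,b} else {})"
proof -
  have e0: "{m. m < 0 \<and> [Pg a, Pg b, Bar, Bar] ! m = Bar} = {}" by auto
  have e1: "{m. m < 1 \<and> [Pg a, Pg b, Bar, Bar] ! m = Bar} = {}" by auto
  show ?thesis unfolding left_of_bar_def
    apply (rule set_eqI)
    apply (simp only: mem_Collect_eq ex_less4 e0 e1)
    apply auto
    done
qed

lemma left_B: "left_of_bar [Pg a, Bar, Pg b, Pg c, Bar] (Suc 0) = {a}"
   "left_of_bar [Pg a, Bar, Pg b, Pg c, Bar] 2 = {a,b,c}"
proof -
  have e0: "{m. m < 0 \<and> [Pg a, Bar, Pg b, Pg c, Bar] ! m = Bar} = {}" by auto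
  have e2: "{m. m < 2 \<and> [Pg a, Bar, Pg b, Pg c, Bar] ! m = Bar} = {1}" by (auto simp: less_Suc_eq numeral_eq_Suc)
  have e3: "{m. m < 3 \<and> [Pg a, Bar, Pg b, Pg c, Bar] ! m = Bar} = {1}" by (auto simp: less_Suc_eq numeral_eq_Suc)
  show "left_of_bar [Pg a, Bar, Pg b, Pg c, Bar] (Suc 0) = {a}"
    unfolding left_of_bar_def
    apply (rule set_eqI)
    apply (simp only: mem_Collect_eq ex_less5 e0 e2 e3)
    apply auto
    done
  show "left_of_bar [Pg a, Bar, Pg b, Pg c, Bar] 2 = {a,b,c}"
    unfolding left_of_bar_def
    apply (rule set_eqI)
    apply (simp only: mem_Collect_eq ex_less5 e0 e2 e3)
    apply auto
    done
qed

lemma card_int_ge2: assumes "x\<in>configs 2" shows "(2 \<le> card (x \<inter> L)) = (x \<subseteq> L)"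
proof
  assume h: "2 \<le> card (x \<inter> L)"
  have f: "finite x" "card x = 2" using assms by (auto simp: configs_def)
  have "card (x \<inter> L) \<le> card x" using f by (intro card_mono) auto
  hence "card (x \<inter> L) = card x" using h f by simp
  hence "x \<inter> L = x" using f card_subset_eq[of x "x \<inter> L"] by auto
  thus "x \<subseteq> L" by auto
next
  assume "x \<subseteq> L" thus "2 \<le> card (x \<inter> L)" using assms by (simp add: configs_def Int_absorb2)
qed

lemma card_int_ge1: assumes "x\<in>configs 2" shows "(1 \<le> card (x \<inter> L)) = (x \<inter> L \<noteq> {})"
proof -
  have "finite (x \<inter> L)" using assms by (auto simp: configs_def)
  thus ?thesis by (simp add: Suc_le_eq card_gt_0_iff)
qed

lemma S_char: "x \<in> S_bar 2 \<alpha> \<longleftrightarrow> x \<in> configs 2 \<and> x \<inter> left_of_bar \<alpha> 1 \<noteq> {} \<and> x \<subseteq> left_of_bar \<alpha> 2"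
proof -
  have i: "(\<forall>i\<in>{1..2::nat}. P i) = (P 1 \<and> P 2)" for P by (auto simp: le_Suc_eq numeral_eq_Suc)
  show ?thesis unfolding S_bar_def mem_Collect_eq i using card_int_ge1 card_int_ge2 by blast
qed

lemma S_A: assumes "a \<noteq> b" shows "S_bar 2 [Pg a, Pg b, Bar, Bar] = {{a,b}}"
proof (rule set_eqI, rule iffI)
  fix x assume "x \<in> S_bar 2 [Pg a, Pg b, Bar, Bar]"
  hence x0: "x \<in> configs 2" "x \<subseteq> {a,b}" unfolding S_char left_A by auto
  obtain p q where "p\<noteq>q" "x={p,q}" using x0(1) by (rule configs2_obtain)
  thus "x \<in> {{a,b}}" using x0 by auto
next
  fix x assume "x \<in> {{a,b}}"
  thus "x \<in> S_bar 2 [Pg a, Pg b, Bar, Bar]" unfolding S_char left_A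
    using pair_configs[OF assms] by auto
qed

lemma S_B: assumes "a \<noteq> b" "a \<noteq> c" "b \<noteq> c" shows "S_bar 2 [Pg a, Bar, Pg b, Pg c, Bar] = {{a,b},{a,c}}"
proof (rule set_eqI, rule iffI)
  fix x assume "x \<in> S_bar 2 [Pg a, Bar, Pg b, Pg c, Bar]"
  hence x0: "x \<in> configs 2" "x \<subseteq> {a,b,c}" "a \<in> x" unfolding S_char left_B One_nat_def by auto
  obtain p q where "p\<noteq>q" "x={p,q}" using x0(1) by (rule configs2_obtain)
  thus "x \<in> {{a,b},{a,c}}" using x0 by auto
next
  fix x assume "x \<in> {{a,b},{a,c}}"
  thus "x \<in> S_bar 2 [Pg a, Bar, Pg b, Pg c, Bar]" unfolding S_char left_B One_nat_def
    using assms pair_configs[of a b] pair_configs[of a c] by auto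
qed

lemma est_A: "a \<noteq> b \<Longrightarrow> ks2_est (KA a b) y = dist_cfg {a,b} y"
  by (simp add: omega_bar_def S_A)

lemma est_B: "a \<noteq> b \<Longrightarrow> a \<noteq> c \<Longrightarrow> b \<noteq> c \<Longrightarrow>
   ks2_est (KB a b c) y = min (dist_cfg {a,b} y) (dist_cfg {a,c} y)"
  by (simp add: omega_bar_def S_B cInf_insert inf_min)


declare ks2_est.simps[simp del]


lemma configs_ne: fixes a b :: 'a assumes "a \<noteq> b" shows "(configs 2 :: 'a set set) \<noteq> {}"
proof -
  have "{a,b} \<in> configs 2" by (rule pair_configs[OF assms])
  thus ?thesis by blast
qed

lemma updA: fixes a b :: 'a assumes "a\<noteq>b" "x\<in>configs 2" shows "bnd {a,b} r x \<le> upd 2 (ks2_est (KA a b)) r x"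
  unfolding upd_def
proof (rule cINF_greatest[OF configs_ne[OF assms(1)]])
  fix z :: "'a set" assume z: "z \<in> configs (2::nat)"
  show "bnd {a, b} r x \<le> ks2_est (KA a b) z + cost_cfg z r x"
    unfolding est_A[OF assms(1)] by (rule bnd_le[OF pair_configs[OF assms(1)] z assms(2)])
qed

lemma updB: fixes a b c :: 'a assumes "a\<noteq>b" "a\<noteq>c" "b\<noteq>c" "x\<in>configs 2"
  shows "min (bnd {a,b} r x) (bnd {a,c} r x) \<le> upd 2 (ks2_est (KB a b c)) r x"
  unfolding upd_def
proof (rule cINF_greatest[OF configs_ne[OF assms(1)]])
  fix z :: "'a set" assume z: "z \<in> configs (2::nat)"
  have 1: "bnd {a,b} r x \<le> dist_cfg {a,b} z + cost_cfg z r x"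
    using bnd_le[OF pair_configs[OF assms(1)] z assms(4)] .
  have 2: "bnd {a,c} r x \<le> dist_cfg {a,c} z + cost_cfg z r x"
    using bnd_le[OF pair_configs[OF assms(2)] z assms(4)] .
  show "min (bnd {a,b} r x) (bnd {a,c} r x) \<le> ks2_est (KB a b c) z + cost_cfg z r x"
    unfolding est_B[OF assms(1-3)] using 1 2 by linarith
qed

lemma three: assumes "x\<in>configs 2" "p\<noteq>q" "p\<noteq>w" "q\<noteq>w" shows "\<not>(p\<in>x \<and> q\<in>x \<and> w\<in>x)"
proof
  assume h: "p\<in>x \<and> q\<in>x \<and> w\<in>x"
  have "card {p,q,w} \<le> card x" by (rule card_mono) (use h assms(1) in \<open>auto simp: configs_def\<close>)
  thus False using assms by (simp add: configs_def)
qed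

lemma adjA: assumes "a\<noteq>b" "x\<in>configs 2"
  shows "K2_adjust (KA a b) r + (\<Sum>(l,s')\<leftarrow>K2_trans (KA a b) r. l * ks2_est s' x) \<le> bnd {a,b} r x"
proof -
  have f: "finite x" using assms(2) by (rule configs_finite)
  show ?thesis
  proof (cases "r = a \<or> r = b")
    case True thus ?thesis using assms by (auto simp: est_A bnd_def)
  next
    case False
    have t: "\<not>(r\<in>x \<and> a\<in>x \<and> b\<in>x)" using three[OF assms(2), of r a b] False assms(1) by blast
    have e: "K2_adjust (KA a b) r + (\<Sum>(l,s')\<leftarrow>K2_trans (KA a b) r. l * ks2_est s' x)
      = 1 + min (dist_cfg {r,a} x) (dist_cfg {r,b} x)" using False assms by (simp add: est_B)
    have dp: "\<And>p q. p\<noteq>q \<Longrightarrow> dist_cfg {p,q} x = (if p\<in>x then 0 else 1) + (if q\<in>x then 0 else 1)"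
      using dist_pair[OF _ f] by simp
    show ?thesis unfolding e bnd_def 
      using False t assms(1) by (cases "r\<in>x"; cases "a\<in>x"; cases "b\<in>x") (simp_all add: dp)
  qed
qed

lemma adjB: assumes "a\<noteq>b" "a\<noteq>c" "b\<noteq>c" "x\<in>configs 2"
  shows "K2_adjust (KB a b c) r + (\<Sum>(l,s')\<leftarrow>K2_trans (KB a b c) r. l * ks2_est s' x)
     \<le> min (bnd {a,b} r x) (bnd {a,c} r x)"
proof -
  have f: "finite x" using assms(4) by (rule configs_finite)
  have dp: "\<And>p q. p\<noteq>q \<Longrightarrow> dist_cfg {p,q} x = (if p\<in>x then 0 else 1) + (if q\<in>x then 0 else 1)"
    using dist_pair[OF _ f] by simp
  have tabc: "\<not>(a\<in>x \<and> b\<in>x \<and> c\<in>x)" using three[OF assms(4), of a b c] assms by blast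
  consider "r = a" | "r = b" | "r = c" | "r \<noteq> a \<and> r \<noteq> b \<and> r \<noteq> c" by blast
  thus ?thesis
  proof cases
    case 1 thus ?thesis using assms by (simp add: est_B bnd_def)
  next
    case 2
    have e: "K2_adjust (KB a b c) r + (\<Sum>(l,s')\<leftarrow>K2_trans (KB a b c) r. l * ks2_est s' x) = dist_cfg {a,b} x"
      using 2 assms by (simp add: est_A insert_commute)
    show ?thesis unfolding e bnd_def using 2 assms tabc
      by (cases "a\<in>x"; cases "b\<in>x"; cases "c\<in>x") (simp_all add: dp)
  next
    case 3
    have e: "K2_adjust (KB a b c) r + (\<Sum>(l,s')\<leftarrow>K2_trans (KB a b c) r. l * ks2_est s' x) = dist_cfg {a,c} x"
      using 3 assms by (simp add: est_A insert_commute)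
    show ?thesis unfolding e bnd_def using 3 assms tabc
      by (cases "a\<in>x"; cases "b\<in>x"; cases "c\<in>x") (simp_all add: dp)
  next
    case 4
    have e: "K2_adjust (KB a b c) r + (\<Sum>(l,s')\<leftarrow>K2_trans (KB a b c) r. l * ks2_est s' x)
       = 1/3 + 1/3 * dist_cfg {r,a} x + 1/3 * dist_cfg {r,b} x + 1/3 * dist_cfg {r,c} x"
      using 4 assms by (simp add: est_A)
    have t2: "\<not>(r\<in>x \<and> a\<in>x \<and> b\<in>x)" "\<not>(r\<in>x \<and> a\<in>x \<and> c\<in>x)" "\<not>(r\<in>x \<and> b\<in>x \<and> c\<in>x)"
      using three[OF assms(4), of r a b] three[OF assms(4), of r a c] three[OF assms(4), of r b c] 4 assms
      by blast+
    show ?thesis unfolding e bnd_def using 4 assms tabc t2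
      by (cases "a\<in>x"; cases "b\<in>x"; cases "c\<in>x"; cases "r\<in>x") (simp_all add: dp)
  qed
qed



lemma cost_le: assumes g: "\<gamma> \<in> couplings \<pi> \<pi>'"
  shows "cost_dist \<pi> r \<pi>' \<le> (\<Sum>x\<in>supp_dist \<pi>. \<Sum>y\<in>supp_dist \<pi>'. \<gamma> (x,y) * cost_cfg x r y)"
proof -
  let ?F = "\<lambda>\<gamma>. \<Sum>xy\<in>supp_dist \<pi> \<times> supp_dist \<pi>'. \<gamma> xy * cost_cfg (fst xy) r (snd xy)"
  have bdd: "bdd_below (?F ` couplings \<pi> \<pi>')"
  proof (rule bdd_belowI[of _ 0])
    fix v assume "v \<in> ?F ` couplings \<pi> \<pi>'"
    then obtain g where g: "g \<in> couplings \<pi> \<pi>'" and v: "v = ?F g" by blast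
    show "0 \<le> v" unfolding v
    proof (rule sum_nonneg)
      fix xy assume "xy \<in> supp_dist \<pi> \<times> supp_dist \<pi>'"
      hence "0 \<le> g xy" using g unfolding couplings_def by (cases xy) auto
      thus "0 \<le> g xy * cost_cfg (fst xy) r (snd xy)" using cost_nonneg by (rule mult_nonneg_nonneg)
    qed
  qed
  have "cost_dist \<pi> r \<pi>' \<le> ?F \<gamma>" unfolding cost_dist_def
    by (rule cInf_lower[OF imageI[OF g] bdd])
  also have "?F \<gamma> = (\<Sum>x\<in>supp_dist \<pi>. \<Sum>y\<in>supp_dist \<pi>'. \<gamma> (x,y) * cost_cfg x r y)"
    by (simp add: sum.cartesian_product case_prod_beta)
  finally show ?thesis .
qed

lemma supp_A: "supp_dist (ks2_dist (KA a b)) = {{a,b}}"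
  by (auto simp: supp_dist_def)

lemma supp_B: "b \<noteq> c \<Longrightarrow> supp_dist (ks2_dist (KB a b c)) = {{a,b},{a,c}}"
  by (auto simp: supp_dist_def doubleton_eq_iff)

lemma mix_single: "mix_dist [(1,s)] = ks2_dist s"
  by (simp add: mix_dist_def fun_eq_iff)

lemma costA_in: assumes "a \<noteq> b" "r = a \<or> r = b" shows "K2_cost (KA a b) r \<le> 0"
proof -
  have tr: "K2_trans (KA a b) r = [(1, KA a b)]" using assms by simp
  let ?g = "\<lambda>_::'a set \<times> 'a set. 1::real"
  have c: "?g \<in> couplings (ks2_dist (KA a b)) (ks2_dist (KA a b))"
    unfolding couplings_def supp_A by simp
  have "K2_cost (KA a b) r \<le> (\<Sum>x\<in>{{a,b}}. \<Sum>y\<in>{{a,b}}. ?g (x,y) * cost_cfg x r y)"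
    unfolding K2_cost_def tr mix_single using cost_le[OF c] unfolding supp_A .
  also have "\<dots> = 0" using assms by (auto simp: cost_cfg_def dist_cfg_def)
  finally show ?thesis .
qed

lemma costA_out: assumes "a \<noteq> b" "r \<noteq> a" "r \<noteq> b" shows "K2_cost (KA a b) r \<le> 1"
proof -
  have tr: "K2_trans (KA a b) r = [(1, KB r a b)]" using assms by simp
  let ?g = "\<lambda>_::'a set \<times> 'a set. 1/2::real"
  have c: "?g \<in> couplings (ks2_dist (KA a b)) (ks2_dist (KB r a b))"
    unfolding couplings_def supp_A supp_B[OF assms(1)] using assms by (simp add: doubleton_eq_iff)
  have "K2_cost (KA a b) r \<le> (\<Sum>x\<in>{{a,b}}. \<Sum>y\<in>{{r,a},{r,b}}. ?g (x,y) * cost_cfg x r y)"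
    unfolding K2_cost_def tr mix_single using cost_le[OF c] unfolding supp_A supp_B[OF assms(1)] .
  also have "\<dots> = 1" using assms by (simp add: doubleton_eq_iff cost_cfg_def dist_pair)
  finally show ?thesis .
qed

lemma costB_a: assumes "a \<noteq> b" "a \<noteq> c" "b \<noteq> c" shows "K2_cost (KB a b c) a \<le> 0"
proof -
  have tr: "K2_trans (KB a b c) a = [(1, KB a b c)]" by simp
  let ?g = "\<lambda>xy::'a set \<times> 'a set. if fst xy = snd xy then 1/2 else 0::real"
  have c: "?g \<in> couplings (ks2_dist (KB a b c)) (ks2_dist (KB a b c))"
    unfolding couplings_def supp_B[OF assms(3)] using assms by (simp add: doubleton_eq_iff)
  have "K2_cost (KB a b c) a \<le> (\<Sum>x\<in>{{a,b},{a,c}}. \<Sum>y\<in>{{a,b},{a,c}}. ?g (x,y) * cost_cfg x a y)"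
    unfolding K2_cost_def tr mix_single using cost_le[OF c] unfolding supp_B[OF assms(3)] .
  also have "\<dots> = 0" using assms by (simp add: doubleton_eq_iff cost_cfg_def dist_cfg_def)
  finally show ?thesis .
qed

lemma costB_b: assumes "a \<noteq> b" "a \<noteq> c" "b \<noteq> c" shows "K2_cost (KB a b c) b \<le> 1/2"
proof -
  have tr: "K2_trans (KB a b c) b = [(1, KA b a)]" using assms by simp
  let ?g = "\<lambda>_::'a set \<times> 'a set. 1/2::real"
  have c: "?g \<in> couplings (ks2_dist (KB a b c)) (ks2_dist (KA b a))"
    unfolding couplings_def supp_B[OF assms(3)] supp_A using assms by (simp add: doubleton_eq_iff)
  have "K2_cost (KB a b c) b \<le> (\<Sum>x\<in>{{a,b},{a,c}}. \<Sum>y\<in>{{b,a}}. ?g (x,y) * cost_cfg x b y)"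
    unfolding K2_cost_def tr mix_single using cost_le[OF c] unfolding supp_B[OF assms(3)] supp_A .
  also have "\<dots> = 1/2" using assms by (simp add: doubleton_eq_iff cost_cfg_def dist_pair)
  finally show ?thesis .
qed

lemma costB_c: assumes "a \<noteq> b" "a \<noteq> c" "b \<noteq> c" shows "K2_cost (KB a b c) c \<le> 1/2"
proof -
  have tr: "K2_trans (KB a b c) c = [(1, KA c a)]" using assms by simp
  let ?g = "\<lambda>_::'a set \<times> 'a set. 1/2::real"
  have c: "?g \<in> couplings (ks2_dist (KB a b c)) (ks2_dist (KA c a))"
    unfolding couplings_def supp_B[OF assms(3)] supp_A using assms by (simp add: doubleton_eq_iff)
  have "K2_cost (KB a b c) c \<le> (\<Sum>x\<in>{{a,b},{a,c}}. \<Sum>y\<in>{{c,a}}. ?g (x,y) * cost_cfg x c y)"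
    unfolding K2_cost_def tr mix_single using cost_le[OF c] unfolding supp_B[OF assms(3)] supp_A .
  also have "\<dots> = 1/2" using assms by (simp add: doubleton_eq_iff cost_cfg_def dist_pair)
  finally show ?thesis .
qed

lemma costB_d: assumes "a \<noteq> b" "a \<noteq> c" "b \<noteq> c" "d \<noteq> a" "d \<noteq> b" "d \<noteq> c"
  shows "K2_cost (KB a b c) d \<le> 1"
proof -
  have tr: "K2_trans (KB a b c) d = [(1/3, KA d a), (1/3, KA d b), (1/3, KA d c)]" using assms by simp
  define \<pi>' :: "'a set \<Rightarrow> real" where "\<pi>' = mix_dist [(1/3, KA d a), (1/3, KA d b), (1/3, KA d c)]"
  have pv: "\<pi>' x = (if x = {d,a} then 1/3 else 0) + (if x = {d,b} then 1/3 else 0) + (if x = {d,c} then 1/3 else 0)" for x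
    unfolding \<pi>'_def mix_dist_def by simp
  have sp: "supp_dist \<pi>' = {{d,a},{d,b},{d,c}}"
    unfolding supp_dist_def pv using assms by (auto simp: doubleton_eq_iff)
  let ?g = "\<lambda>xy::'a set \<times> 'a set.
     if xy = ({a,b},{d,a}) then 1/6 else if xy = ({a,b},{d,b}) then 1/3
     else if xy = ({a,c},{d,a}) then 1/6 else if xy = ({a,c},{d,c}) then 1/3 else 0::real"
  have c: "?g \<in> couplings (ks2_dist (KB a b c)) \<pi>'"
    unfolding couplings_def supp_B[OF assms(3)] sp using assms by (simp add: doubleton_eq_iff pv)
  have "K2_cost (KB a b c) d \<le> (\<Sum>x\<in>{{a,b},{a,c}}. \<Sum>y\<in>{{d,a},{d,b},{d,c}}. ?g (x,y) * cost_cfg x d y)"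
    unfolding K2_cost_def tr \<pi>'_def[symmetric] using cost_le[OF c] unfolding supp_B[OF assms(3)] sp .
  also have "\<dots> = 1" using assms by (simp add: doubleton_eq_iff cost_cfg_def dist_pair)
  finally show ?thesis .
qed


theorem mainTheorem9:
  assumes "infinite (UNIV :: 'p set)"
  shows "(\<forall>(s :: 'p ks2) r. valid_ks2 s \<longrightarrow>
            (\<forall>x\<in>configs 2. upd 2 (ks2_est s) r x
                \<ge> K2_adjust s r + (\<Sum>(l, s')\<leftarrow>K2_trans s r. l * ks2_est s' x)))
       \<and> (\<forall>s :: 'p ks2. valid_ks2 s \<longrightarrow> Phi2 s \<ge> 0)
       \<and> (\<forall>(s :: 'p ks2) r. valid_ks2 s \<longrightarrow>
            K2_cost s r + (\<Sum>(l, s')\<leftarrow>K2_trans s r. l * Phi2 s') - Phi2 s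
              \<le> 3/2 * K2_adjust s r)"
proof -
  have P1: "\<forall>x\<in>configs 2. upd 2 (ks2_est s) r x
                \<ge> K2_adjust s r + (\<Sum>(l, s')\<leftarrow>K2_trans s r. l * ks2_est s' x)"
    if v: "valid_ks2 s" for s :: "'p ks2" and r
  proof
    fix x :: "'p set" assume x: "x \<in> configs 2"
    show "upd 2 (ks2_est s) r x \<ge> K2_adjust s r + (\<Sum>(l, s')\<leftarrow>K2_trans s r. l * ks2_est s' x)"
    proof (cases s)
      case (KA a b)
      have ab: "a \<noteq> b" using v KA by simp
      show ?thesis unfolding KA by (rule order_trans[OF adjA[OF ab x] updA[OF ab x]])
    next
      case (KB a b c)
      have d: "a \<noteq> b" "a \<noteq> c" "b \<noteq> c" using v KB by auto
      show ?thesis unfolding KB by (rule order_trans[OF adjB[OF d x] updB[OF d x]])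
    qed
  qed
  have P2: "Phi2 s \<ge> 0" for s :: "'p ks2" by (cases s) auto
  have P3: "K2_cost s r + (\<Sum>(l, s')\<leftarrow>K2_trans s r. l * Phi2 s') - Phi2 s \<le> 3/2 * K2_adjust s r"
    if v: "valid_ks2 s" for s :: "'p ks2" and r
  proof (cases s)
    case (KA a b)
    have ab: "a \<noteq> b" using v KA by simp
    show ?thesis
    proof (cases "r = a \<or> r = b")
      case True thus ?thesis using costA_in[OF ab True] KA by auto
    next
      case False thus ?thesis using costA_out[OF ab] KA by auto
    qed
  next
    case (KB a b c)
    have d: "a \<noteq> b" "a \<noteq> c" "b \<noteq> c" using v KB by auto
    consider "r = a" | "r = b" | "r = c" | "r \<noteq> a \<and> r \<noteq> b \<and> r \<noteq> c" by blast
    thus ?thesis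
    proof cases
      case 1 thus ?thesis using costB_a[OF d] KB d by simp
    next
      case 2 thus ?thesis using costB_b[OF d] KB d by simp
    next
      case 3 thus ?thesis using costB_c[OF d] KB d by simp
    next
      case 4 thus ?thesis using costB_d[OF d, of r] KB d by simp
    qed
  qed
  show ?thesis using P1 P2 P3 by blast
qed

end
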